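(* Let $C=\begin{pmatrix}0&1\\-1&0\end{pmatrix}$, $D=\begin{pmatrix}0&1\\-1&1\end{pmatrix}$ and $\Gamma_3=\langle C,D\rangle\subset\mathrm{PSL}_2\mathbb{R}$ (the $(2,3,\infty)$-triangle group, i.e. the modular group, with $\Gamma_3\cong\langle C,D\mid C^2=D^3=1\rangle$). If $X,Y\in\Gamma_3$ satisfy $\Gamma_3=\langle X,Y\rangle$ and $\mathrm{tr}\,X=\mathrm{tr}\,Y$, then $X$ and $Y$ are parabolic.
   Context: Traces are of lifts to $\mathrm{SL}_2\mathbb{R}$; "$\mathrm{tr}\,X=\mathrm{tr}\,Y$" means the elements admit lifts of equal trace. Parabolic means non-identity with $\mathrm{tr}^2=4$. *)

theory Defs
  imports "HOL-Analysis.Analysis"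
begin

text \<open>Elements of SL(2,R) are represented as real 2x2 matrices of determinant 1;
  an element of PSL(2,R) is represented by either of its two lifts A, -A.\<close>

type_synonym mat2 = "real^2^2"

inductive_set gen_subgroup :: "mat2 set \<Rightarrow> mat2 set" for S where
  gen_one: "mat 1 \<in> gen_subgroup S"
| gen_elem: "s \<in> S \<Longrightarrow> s \<in> gen_subgroup S"
| gen_inv: "s \<in> S \<Longrightarrow> matrix_inv s \<in> gen_subgroup S"
| gen_mult: "a \<in> gen_subgroup S \<Longrightarrow> b \<in> gen_subgroup S \<Longrightarrow> a ** b \<in> gen_subgroup S"

text \<open>Preimage in SL(2,R) of the subgroup of PSL(2,R) generated by the images of S:
  it is the subgroup generated by S together with -I.\<close>
definition psl_gen :: "mat2 set \<Rightarrow> mat2 set" where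
  "psl_gen S = gen_subgroup (insert (- mat 1) S)"

definition matC :: mat2 where
  "matC = vector [vector [0, 1], vector [-1, 0]]"

definition matD :: mat2 where
  "matD = vector [vector [0, 1], vector [-1, 1]]"

definition Gamma3 :: "mat2 set" where
  "Gamma3 = psl_gen {matC, matD}"

definition parabolic :: "mat2 \<Rightarrow> bool" where
  "parabolic A \<longleftrightarrow> A \<noteq> mat 1 \<and> A \<noteq> - mat 1 \<and> (trace A)\<^sup>2 = 4"

end

theory Submission imports Defs begin

definition mk :: "real \<Rightarrow> real \<Rightarrow> real \<Rightarrow> real \<Rightarrow> mat2" where
  "mk a b c d = vector [vector [a, b], vector [c, d]]"

lemma mk_nth[simp]: "mk a b c d $ 1 $ 1 = a" "mk a b c d $ 1 $ 2 = b"
  "mk a b c d $ 2 $ 1 = c" "mk a b c d $ 2 $ 2 = d"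
  by (simp_all add: mk_def)

lemma mat_mk: "(A::mat2) = mk (A$1$1) (A$1$2) (A$2$1) (A$2$2)"
  by (simp add: vec_eq_iff forall_2)

lemma mk_eq[simp]: "mk a b c d = mk a' b' c' d' \<longleftrightarrow> a = a' \<and> b = b' \<and> c = c' \<and> d = d'"
  by (metis mk_nth)

lemma mk_mult[simp]: "mk a b c d ** mk e f g h = mk (a*e+b*g) (a*f+b*h) (c*e+d*g) (c*f+d*h)"
  by (simp add: vec_eq_iff forall_2 matrix_matrix_mult_def sum_2)

lemma mk_add[simp]: "mk a b c d + mk e f g h = mk (a+e) (b+f) (c+g) (d+h)"
  by (simp add: vec_eq_iff forall_2)

lemma mk_diff[simp]: "mk a b c d - mk e f g h = mk (a-e) (b-f) (c-g) (d-h)"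
  by (simp add: vec_eq_iff forall_2)

lemma mk_neg[simp]: "- mk a b c d = mk (-a) (-b) (-c) (-d)"
  by (simp add: vec_eq_iff forall_2)

lemma mk_scale[simp]: "k *\<^sub>R mk a b c d = mk (k*a) (k*b) (k*c) (k*d)"
  by (simp add: vec_eq_iff forall_2)

lemma mat1_mk: "(mat 1 :: mat2) = mk 1 0 0 1"
  by (simp add: vec_eq_iff forall_2 mat_def)

lemma det_mk[simp]: "det (mk a b c d) = a*d - b*c"
  by (simp add: det_2)

lemma trace_mk[simp]: "trace (mk a b c d) = a + d"
  by (simp add: trace_def sum_2)

lemma matC_mk: "matC = mk 0 1 (-1) 0" by (simp add: matC_def mk_def)
lemma matD_mk: "matD = mk 0 1 (-1) 1" by (simp add: matD_def mk_def)

lemma matrix_inv_mk: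
  assumes "a*d - b*c = 1"
  shows "matrix_inv (mk a b c d) = mk d (-b) (-c) a"
proof -
  have "mk a b c d ** mk d (-b) (-c) a = mat 1 \<and> mk d (-b) (-c) a ** mk a b c d = mat 1"
    using assms by (simp add: mat1_mk algebra_simps)
  moreover have "\<And>B. mk a b c d ** B = mat 1 \<and> B ** mk a b c d = mat 1 \<Longrightarrow> B = mk d (-b) (-c) a"
    by (metis calculation matrix_mul_assoc matrix_mul_lid matrix_mul_rid)
  ultimately show ?thesis unfolding matrix_inv_def by (rule some_equality)
qed

definition good :: "mat2 \<Rightarrow> bool" where
  "good M \<longleftrightarrow> M$1$1 \<in> \<int> \<and> M$1$2 \<in> \<int> \<and> M$2$1 \<in> \<int> \<and> M$2$2 \<in> \<int> \<and> det M = 1"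

lemma good_mk: "good (mk a b c d) \<longleftrightarrow> a \<in> \<int> \<and> b \<in> \<int> \<and> c \<in> \<int> \<and> d \<in> \<int> \<and> a*d - b*c = 1"
  by (simp add: good_def)

lemma good_gen:
  assumes "\<And>s. s \<in> S \<Longrightarrow> good s" and "M \<in> gen_subgroup S"
  shows "good M"
  using assms(2)
proof (induction rule: gen_subgroup.induct)
  case gen_one
  then show ?case by (simp add: mat1_mk good_mk)
next
  case (gen_elem s)
  then show ?case using assms(1) by blast
next
  case (gen_inv s)
  obtain a b c d where s: "s = mk a b c d" using mat_mk by blast
  have "good s" using assms(1) gen_inv by blast
  then show ?case unfolding s good_mk by (simp add: matrix_inv_mk good_mk algebra_simps)
next
  case (gen_mult A B)
  obtain a b c d where A: "A = mk a b c d" using mat_mk by blast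
  obtain e f g h where B: "B = mk e f g h" using mat_mk by blast
  have "det (A ** B) = 1" using gen_mult by (simp add: det_mul good_def)
  moreover have "a*e+b*g \<in> \<int>" "a*f+b*h \<in> \<int>" "c*e+d*g \<in> \<int>" "c*f+d*h \<in> \<int>"
    using gen_mult unfolding A B good_mk by auto
  ultimately show ?case unfolding A B good_def by simp
qed

definition inL :: "mat2 \<Rightarrow> mat2 \<Rightarrow> mat2 \<Rightarrow> bool" where
  "inL X Y M \<longleftrightarrow> (\<exists>p q r s. p\<in>\<int> \<and> q\<in>\<int> \<and> r\<in>\<int> \<and> s\<in>\<int> \<and>
      M = p *\<^sub>R mat 1 + q *\<^sub>R X + r *\<^sub>R Y + s *\<^sub>R (X ** Y))"

lemma inL_intro:
  assumes "p\<in>\<int>" "q\<in>\<int>" "r\<in>\<int>" "s\<in>\<int>" "M = p *\<^sub>R mat 1 + q *\<^sub>R X + r *\<^sub>R Y + s *\<^sub>R (X ** Y)"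
  shows "inL X Y M"
  unfolding inL_def using assms by blast

lemma inL_diff:
  assumes "inL X Y M" "inL X Y M'" shows "inL X Y (M - M')"
proof -
  obtain p q r s where 1: "p\<in>\<int>" "q\<in>\<int>" "r\<in>\<int>" "s\<in>\<int>" "M = p *\<^sub>R mat 1 + q *\<^sub>R X + r *\<^sub>R Y + s *\<^sub>R (X ** Y)"
    using assms(1) inL_def by auto
  obtain p' q' r' s' where 2: "p'\<in>\<int>" "q'\<in>\<int>" "r'\<in>\<int>" "s'\<in>\<int>" "M' = p' *\<^sub>R mat 1 + q' *\<^sub>R X + r' *\<^sub>R Y + s' *\<^sub>R (X ** Y)"
    using assms(2) inL_def by auto
  show ?thesis unfolding inL_def
    by (rule exI[of _ "p-p'"], rule exI[of _ "q-q'"], rule exI[of _ "r-r'"], rule exI[of _ "s-s'"])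
       (simp add: 1 2 algebra_simps)
qed

lemma inL_scale:
  assumes "inL X Y M" "k \<in> \<int>" shows "inL X Y (k *\<^sub>R M)"
proof -
  obtain p q r s where 1: "p\<in>\<int>" "q\<in>\<int>" "r\<in>\<int>" "s\<in>\<int>" "M = p *\<^sub>R mat 1 + q *\<^sub>R X + r *\<^sub>R Y + s *\<^sub>R (X ** Y)"
    using assms(1) inL_def by auto
  have "k *\<^sub>R M = (k * p) *\<^sub>R mat 1 + (k * q) *\<^sub>R X + (k * r) *\<^sub>R Y + (k * s) *\<^sub>R (X ** Y)"
    by (simp add: 1 algebra_simps)
  then show ?thesis using 1 assms(2) by (intro inL_intro) auto
qed

lemma inL_one: "inL X Y (mat 1)"
  unfolding inL_def by (rule exI[of _ 1], rule exI[of _ 0], rule exI[of _ 0], rule exI[of _ 0]) simp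

lemma inL_X:
  assumes "X = mk a b c d" "a*d - b*c = 1" "a + d \<in> \<int>" "inL X Y M"
  shows "inL X Y (X ** M)"
proof -
  obtain p q r s where 1: "p\<in>\<int>" "q\<in>\<int>" "r\<in>\<int>" "s\<in>\<int>" "M = p *\<^sub>R mat 1 + q *\<^sub>R X + r *\<^sub>R Y + s *\<^sub>R (X ** Y)"
    using assms(4) inL_def by auto
  obtain e f g h where Y: "Y = mk e f g h" using mat_mk by blast
  have "X ** M = (-q) *\<^sub>R mat 1 + (p + q*(a+d)) *\<^sub>R X + (-s) *\<^sub>R Y + (r + s*(a+d)) *\<^sub>R (X ** Y)"
    unfolding 1(5) assms(1) Y mat1_mk
    apply (simp only: mk_mult mk_add mk_scale mk_eq)
    using assms(2) by algebra
  moreover have "-q \<in> \<int>" "p + q*(a+d) \<in> \<int>" "-s \<in> \<int>" "r + s*(a+d) \<in> \<int>"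
    using 1 assms(3) by auto
  ultimately show ?thesis by (intro inL_intro)
qed

lemma sq_ne2: "(x::int)^2 \<noteq> 2"
proof
  assume h: "x^2 = 2"
  have "\<bar>x\<bar> \<le> 1 \<or> \<bar>x\<bar> \<ge> 2" by linarith
  then show False
  proof
    assume "\<bar>x\<bar> \<le> 1"
    then have "\<bar>x\<bar>^2 \<le> 1^2" by (rule power_mono) simp
    then show False using h by simp
  next
    assume "\<bar>x\<bar> \<ge> 2"
    then have "\<bar>x\<bar>^2 \<ge> 2^2" by (rule power_mono) simp
    then show False using h by simp
  qed
qed

lemma sq_ne6: "(x::int)^2 \<noteq> 6"
proof
  assume h: "x^2 = 6"
  have "\<bar>x\<bar> \<le> 2 \<or> \<bar>x\<bar> \<ge> 3" by linarith
  then show False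
  proof
    assume "\<bar>x\<bar> \<le> 2"
    then have "\<bar>x\<bar>^2 \<le> 2^2" by (rule power_mono) simp
    then show False using h by simp
  next
    assume "\<bar>x\<bar> \<ge> 3"
    then have "\<bar>x\<bar>^2 \<ge> 3^2" by (rule power_mono) simp
    then show False using h by simp
  qed
qed

lemma dioph:
  fixes x z :: int
  assumes h: "4 - 2*x^2 - z^2 + x^2*z = 1 \<or> 4 - 2*x^2 - z^2 + x^2*z = -1"
  shows "x^2 = 4"
proof -
  define u where "u = x^2"
  have u0: "u \<ge> 0" unfolding u_def by simp
  have u2: "u \<noteq> 2" "u \<noteq> 6" unfolding u_def using sq_ne2 sq_ne6 by auto
  have e: "4 - 2*u - z^2 + u*z = (z-2)*(u-z-2)" by (simp add: algebra_simps power2_eq_square)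
  have h': "(z-2)*(u-z-2) = 1 \<or> (z-2)*(u-z-2) = -1" using h e unfolding u_def by simp
  consider "z \<le> -3" | "z = -2" | "z = -1" | "z = 0" | "z = 1" | "z = 2" | "z = 3" | "z \<ge> 4" by linarith
  then have "u = 4"
  proof cases
    case 1
    have "(z-2)*(u-z-2) \<le> (z-2)*(-z-2)" using 1 u0 by (intro mult_left_mono_neg) auto
    moreover have "(-z)*(-z) \<ge> 3*3" using 1 by (intro mult_mono) auto
    moreover have "(z-2)*(-z-2) = 4 - (-z)*(-z)" by (simp add: algebra_simps)
    ultimately show ?thesis using h' by linarith
  next
    case 8
    have "u - z - 2 \<ge> 1 \<or> u - z - 2 = 0 \<or> u - z - 2 \<le> -1" by linarith
    moreover have "u - z - 2 \<ge> 1 \<Longrightarrow> (z-2)*(u-z-2) \<ge> 2*1" using 8 by (intro mult_mono) auto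
    moreover have "u - z - 2 \<le> -1 \<Longrightarrow> (z-2)*(-(u-z-2)) \<ge> 2*1" using 8 by (intro mult_mono) auto
    moreover have "(z-2)*(-(u-z-2)) = -((z-2)*(u-z-2))" by (simp only: mult_minus_right)
    ultimately have False using h' by (smt (verit) mult_cancel_left1 mult_eq_0_iff)
    then show ?thesis ..
  next
    case 2
    then show ?thesis using h' u2 by (auto; presburger)
  next
    case 3
    then show ?thesis using h' u2 by (auto; presburger)
  next
    case 4
    then show ?thesis using h' u2 by (auto; presburger)
  next
    case 5
    then show ?thesis using h' u2 by (auto; presburger)
  next
    case 6
    then show ?thesis using h' u2 by (auto; presburger)
  next
    case 7
    then show ?thesis using h' u2 by (auto; presburger)
  qed
  then show ?thesis unfolding u_def .
qed


lemma inL_Y: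
  assumes "X = mk a b c d" "a*d - b*c = 1" "a + d \<in> \<int>"
    "Y = mk e f g h" "e*h - f*g = 1" "e + h \<in> \<int>" "a*e+b*g+c*f+d*h \<in> \<int>" "inL X Y M"
  shows "inL X Y (Y ** M)"
proof -
  obtain p q r s where 1: "p\<in>\<int>" "q\<in>\<int>" "r\<in>\<int>" "s\<in>\<int>" "M = p *\<^sub>R mat 1 + q *\<^sub>R X + r *\<^sub>R Y + s *\<^sub>R (X ** Y)"
    using assms(8) inL_def by auto
  define x where "x = a + d"
  define y where "y = e + h"
  define z where "z = a*e+b*g+c*f+d*h"
  have "Y ** M = (q*(z-x*y) - r - s*x) *\<^sub>R mat 1 + (q*y + s) *\<^sub>R X + (p + q*x + r*y + s*z) *\<^sub>R Y + (-q) *\<^sub>R (X ** Y)"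
    unfolding 1(5) assms(1,4) mat1_mk x_def y_def z_def
    apply (simp only: mk_mult mk_add mk_scale mk_eq)
    using assms(2,5) by algebra
  moreover have "q*(z-x*y) - r - s*x \<in> \<int>" "q*y + s \<in> \<int>" "p + q*x + r*y + s*z \<in> \<int>" "-q \<in> \<int>"
    using 1 assms(3,6,7) unfolding x_def y_def z_def by auto
  ultimately show ?thesis by (intro inL_intro)
qed

lemma inL_neg: assumes "inL X Y M" shows "inL X Y ((- mat 1) ** M)"
proof -
  obtain m1 m2 m3 m4 where M: "M = mk m1 m2 m3 m4" using mat_mk by blast
  have "(- mat 1) ** M = (-1) *\<^sub>R M"
    unfolding M by (simp add: mat1_mk)
  then show ?thesis using inL_scale[OF assms, of "-1"] by simp
qed

lemma inL_adj:
  assumes "X = mk a b c d" "a*d - b*c = 1" "a + d \<in> \<int>" "inL X Y M"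
  shows "inL X Y (mk d (-b) (-c) a ** M)"
proof -
  have "mk d (-b) (-c) a ** M = (a+d) *\<^sub>R M - X ** M"
    unfolding assms(1) by (subst (1 2 3) mat_mk[of M]) (simp add: algebra_simps)
  then show ?thesis using inL_diff[OF inL_scale[OF assms(4,3)] inL_X[OF assms]] by simp
qed

lemma inL_adjY:
  assumes "X = mk a b c d" "a*d - b*c = 1" "a + d \<in> \<int>"
    "Y = mk e f g h" "e*h - f*g = 1" "e + h \<in> \<int>" "a*e+b*g+c*f+d*h \<in> \<int>" "inL X Y M"
  shows "inL X Y (mk h (-f) (-g) e ** M)"
proof -
  have "mk h (-f) (-g) e ** M = (e+h) *\<^sub>R M - Y ** M"
    unfolding assms(4) by (subst (1 2 3) mat_mk[of M]) (simp add: algebra_simps)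
  then show ?thesis using inL_diff[OF inL_scale[OF assms(8,6)] inL_Y[OF assms]] by simp
qed

lemma gen_L:
  assumes hyps: "X = mk a b c d" "a*d - b*c = 1" "a + d \<in> \<int>"
    "Y = mk e f g h" "e*h - f*g = 1" "e + h \<in> \<int>" "a*e+b*g+c*f+d*h \<in> \<int>"
    and "M \<in> psl_gen {X, Y}"
  shows "\<forall>N. inL X Y N \<longrightarrow> inL X Y (M ** N)"
  using assms(8) unfolding psl_gen_def
proof (induction rule: gen_subgroup.induct)
  case gen_one
  then show ?case by (simp add: matrix_mul_lid)
next
  case (gen_elem s)
  then show ?case using inL_neg inL_X[OF hyps(1-3)] inL_Y[OF hyps(1-7)] by auto
next
  case (gen_inv s)
  have m: "matrix_inv (- mat 1 :: mat2) = - mat 1"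
    by (simp add: mat1_mk matrix_inv_mk)
  have x: "matrix_inv X = mk d (-b) (-c) a" using hyps by (simp add: matrix_inv_mk)
  have y: "matrix_inv Y = mk h (-f) (-g) e" using hyps by (simp add: matrix_inv_mk)
  from gen_inv show ?case using m x y inL_neg inL_adj[OF hyps(1-3)] inL_adjY[OF hyps(1-7)] by auto
next
  case (gen_mult A B)
  then show ?case by (metis matrix_mul_assoc)
qed

lemma comm:
  assumes "X = mk a b c d" "Y = mk e f g h" "inL X Y M" "inL X Y M2"
  shows "\<exists>u v w. u\<in>\<int> \<and> v\<in>\<int> \<and> w\<in>\<int> \<and>
    M ** M2 - M2 ** M = (X ** Y - Y ** X) ** (u *\<^sub>R mat 1 + v *\<^sub>R mk d (-b) (-c) a + w *\<^sub>R Y)"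
proof -
  obtain p q r s where 1: "p\<in>\<int>" "q\<in>\<int>" "r\<in>\<int>" "s\<in>\<int>" "M = p *\<^sub>R mat 1 + q *\<^sub>R X + r *\<^sub>R Y + s *\<^sub>R (X ** Y)"
    using assms(3) inL_def by auto
  obtain p2 q2 r2 s2 where 2: "p2\<in>\<int>" "q2\<in>\<int>" "r2\<in>\<int>" "s2\<in>\<int>" "M2 = p2 *\<^sub>R mat 1 + q2 *\<^sub>R X + r2 *\<^sub>R Y + s2 *\<^sub>R (X ** Y)"
    using assms(4) inL_def by auto
  have "M ** M2 - M2 ** M = (X ** Y - Y ** X) ** ((q * r2 - r * q2) *\<^sub>R mat 1 + (q * s2 - s * q2) *\<^sub>R mk d (-b) (-c) a + (-(r * s2 - s * r2)) *\<^sub>R Y)"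
    unfolding 1(5) 2(5) assms(1,2) mat1_mk
    apply (simp only: mk_mult mk_add mk_diff mk_scale mk_eq)
    by algebra
  moreover have "q * r2 - r * q2 \<in> \<int>" "q * s2 - s * q2 \<in> \<int>" "-(r * s2 - s * r2) \<in> \<int>"
    using 1 2 by auto
  ultimately show ?thesis by blast
qed


lemma int_unit:
  fixes k n :: real
  assumes "k \<in> \<int>" "n \<in> \<int>" "k * n = -1"
  shows "k = 1 \<or> k = -1"
proof -
  obtain i where i: "k = of_int i" using assms(1) Ints_cases by blast
  obtain j where j: "n = of_int j" using assms(2) Ints_cases by blast
  have "i * j = -1" using assms(3) unfolding i j by (metis of_int_eq_iff of_int_minus of_int_mult of_int_1)
  then have "i dvd 1" by (metis dvdI equation_minus_iff mult_minus_right)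
  then have "\<bar>i\<bar> = 1" by (simp add: zdvd1_eq)
  then show ?thesis unfolding i by auto
qed

theorem mainTheorem10:
  fixes X Y :: mat2
  assumes "X \<in> Gamma3" and "Y \<in> Gamma3"
    and "psl_gen {X, Y} = Gamma3"
    and "trace X = trace Y \<or> trace X = - trace Y"
  shows "parabolic X \<and> parabolic Y"
proof -
  obtain a b c d where X: "X = mk a b c d" using mat_mk by blast
  obtain e f g h where Y: "Y = mk e f g h" using mat_mk by blast
  have gS: "\<And>s. s \<in> {- mat 1, matC, matD} \<Longrightarrow> good s"
    by (auto simp: mat1_mk matC_mk matD_mk good_mk)
  have "good X" using good_gen[OF gS] assms(1) unfolding Gamma3_def psl_gen_def by blast
  then have ga: "a \<in> \<int>" "b \<in> \<int>" "c \<in> \<int>" "d \<in> \<int>" "a*d - b*c = 1" unfolding X good_mk by auto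
  have "good Y" using good_gen[OF gS] assms(2) unfolding Gamma3_def psl_gen_def by blast
  then have ge: "e \<in> \<int>" "f \<in> \<int>" "g \<in> \<int>" "h \<in> \<int>" "e*h - f*g = 1" unfolding Y good_mk by auto
  define x where "x = a + d"
  define y where "y = e + h"
  define z where "z = a*e+b*g+c*f+d*h"
  have xi: "x \<in> \<int>" "y \<in> \<int>" "z \<in> \<int>" unfolding x_def y_def z_def using ga ge by auto
  note hyps = X ga(5) xi(1)[unfolded x_def] Y ge(5) xi(2)[unfolded y_def] xi(3)[unfolded z_def]
  have "matC \<in> Gamma3" unfolding Gamma3_def psl_gen_def by (auto intro: gen_elem)
  then have Cin: "matC \<in> psl_gen {X, Y}" using assms(3) by simp
  have "matC ** matD \<in> Gamma3" unfolding Gamma3_def psl_gen_def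
    by (auto intro: gen_elem gen_mult)
  then have CDin: "matC ** matD \<in> psl_gen {X, Y}" using assms(3) by simp
  have LC: "inL X Y matC" using gen_L[OF hyps Cin] inL_one by (metis matrix_mul_rid)
  have LCD: "inL X Y (matC ** matD)" using gen_L[OF hyps CDin] inL_one by (metis matrix_mul_rid)
  have Lm: "inL X Y ((-1) *\<^sub>R mat 1)" using inL_scale[OF inL_one, of "-1"] by simp
  define E12 where "E12 = matC ** matD - (-1) *\<^sub>R mat 1"
  define E21 where "E21 = E12 - matC"
  have L12: "inL X Y E12" unfolding E12_def using inL_diff[OF LCD Lm] .
  have L21: "inL X Y E21" unfolding E21_def using inL_diff[OF L12 LC] .
  obtain u v w where uvw: "u \<in> \<int>" "v \<in> \<int>" "w \<in> \<int>"
    "E12 ** E21 - E21 ** E12 = (X ** Y - Y ** X) ** (u *\<^sub>R mat 1 + v *\<^sub>R mk d (-b) (-c) a + w *\<^sub>R Y)"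
    using comm[OF X Y L12 L21] by blast
  define K where "K = X ** Y - Y ** X"
  define N where "N = u *\<^sub>R mat 1 + v *\<^sub>R mk d (-b) (-c) a + w *\<^sub>R Y"
  have H: "E12 ** E21 - E21 ** E12 = mk 1 0 0 (-1)"
    unfolding E12_def E21_def by (simp add: matC_mk matD_mk mat1_mk)
  have KN: "K ** N = mk 1 0 0 (-1)" using uvw(4) H unfolding K_def N_def by simp
  have detKN: "det K * det N = -1" using det_mul[of K N] unfolding KN by simp
  have dN: "det N = (u + v * d + w * e) * (u + v * a + w * h) - (w * f - v * b) * (w * g - v * c)"
    unfolding N_def Y mat1_mk by (simp add: algebra_simps)
  have "det N \<in> \<int>" unfolding dN using uvw(1-3) ga ge
    by (intro Ints_add Ints_mult Ints_diff; simp)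
  moreover have dK: "det K = 4 - x^2 - y^2 - z^2 + x*y*z"
    unfolding K_def X Y x_def y_def z_def
    apply (simp only: mk_mult mk_diff det_mk)
    using ga(5) ge(5) by algebra
  moreover have "det K \<in> \<int>" unfolding dK using xi by auto
  ultimately have Ku: "det K = 1 \<or> det K = -1" using int_unit detKN by blast
  obtain xx where xx: "x = of_int xx" using xi(1) Ints_cases by blast
  obtain zz where zz: "z = of_int zz" using xi(3) Ints_cases by blast
  have tr: "trace X = x" "trace Y = y" unfolding X Y x_def y_def by simp_all
  have x4: "x^2 = 4"
  proof (cases "y = x")
    case True
    have "real_of_int (4 - 2*xx^2 - zz^2 + xx^2*zz) = det K" unfolding dK True xx zz
      by (simp add: power2_eq_square)
    then have "4 - 2*xx^2 - zz^2 + xx^2*zz = 1 \<or> 4 - 2*xx^2 - zz^2 + xx^2*zz = -1"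
      using Ku by (metis of_int_eq_1_iff of_int_eq_iff of_int_minus of_int_1)
    then have "xx^2 = 4" by (rule dioph)
    then show ?thesis unfolding xx by (metis of_int_numeral of_int_power of_int_eq_iff)
  next
    case False
    then have yx: "y = - x" using assms(4) tr by auto
    have "real_of_int (4 - 2*xx^2 - (-zz)^2 + xx^2*(-zz)) = det K" unfolding dK yx xx zz
      by (simp add: power2_eq_square)
    then have "4 - 2*xx^2 - (-zz)^2 + xx^2*(-zz) = 1 \<or> 4 - 2*xx^2 - (-zz)^2 + xx^2*(-zz) = -1"
      using Ku by (metis of_int_eq_1_iff of_int_eq_iff of_int_minus of_int_1)
    then have "xx^2 = 4" by (rule dioph)
    then show ?thesis unfolding xx by (metis of_int_numeral of_int_power of_int_eq_iff)
  qed
  have y4: "y^2 = 4" using x4 assms(4) tr by auto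
  have K0: "det K \<noteq> 0" using Ku by auto
  have "X \<noteq> mat 1" "X \<noteq> - mat 1" "Y \<noteq> mat 1" "Y \<noteq> - mat 1"
    using K0 unfolding K_def X Y mat1_mk by (auto simp: algebra_simps)
  then show ?thesis unfolding parabolic_def tr using x4 y4 by simp
qed

end
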